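(* Let $\mathbf V$ be a monoid variety and let $f:\Sigma^\ast\to\Sigma^\ast$ be a rational partial function such that $\mathrm{dom}(f)$ is a $\mathbf V$-language. Then $f$ is definable by an unambiguous $\mathbf V$-NFT if and only if its completion $\bar f$ is definable by an unambiguous $\mathbf V$-NFT.
   Context: The completion of $f$ is the total function $\bar f:\Sigma^\ast\to(\Sigma\uplus\{\bot\})^\ast$ with $\bar f(u)=f(u)$ if $u\in\mathrm{dom}(f)$ and $\bar f(u)=\bot$ otherwise ($\bot$ a fresh output letter). A (real-time) NFT is $T=(Q,I,F,\Delta,i,t)$ with partial $\Delta:Q\times\Sigma\times Q\to\Gamma^\ast$, $i:I\to\Gamma^\ast$, $t:F\to\Gamma^\ast$ ($\Gamma$ an output alphabet), relating $u$ to $i(q_0)wt(q_f)$ for each successful run $q_0\xrightarrow{u\mid w}q_f$; rational functions are those defined by NFTs. It is unambiguous if its underlying automaton (outputs forgotten) has at most one successful run on each word. The transition monoid of an automaton with states $Q$ is $\Sigma^\ast/\equiv$ where $u\equiv v$ iff for all $p,q$ there is a run $p\to q$ on $u$ iff on $v$; a $\mathbf V$-automaton ($\mathbf V$-NFT) is one whose (underlying automaton's) transition monoid is in $\mathbf V$; a $\mathbf V$-language is a language recognized by a $\mathbf V$-automaton. *)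

theory Defs
  imports "HOL-Algebra.Group"
begin

text \<open>Finite monoids are represented (up to isomorphism) with carrier a subset of nat.\<close>

definition monoid_variety :: "(nat monoid \<Rightarrow> bool) \<Rightarrow> bool" where
  "monoid_variety V \<longleftrightarrow>
     (\<forall>M. V M \<longrightarrow> monoid M \<and> finite (carrier M)) \<and>
     (\<exists>M. V M) \<and>
     (\<forall>M H. V M \<and> submonoid H M \<longrightarrow> V (M\<lparr>carrier := H\<rparr>)) \<and>
     (\<forall>M N h. V M \<and> monoid N \<and> h \<in> hom M N \<and> h \<one>\<^bsub>M\<^esub> = \<one>\<^bsub>N\<^esub>
              \<and> h ` carrier M = carrier N \<longrightarrow> V N) \<and>
     (\<forall>M N P. V M \<and> V N \<and> monoid P \<and> P \<cong> (M \<times>\<times> N) \<longrightarrow> V P)"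

record ('q, 'a) nfa =
  nfa_states :: "'q set"
  nfa_init :: "'q set"
  nfa_final :: "'q set"
  nfa_trans :: "'q \<Rightarrow> 'a \<Rightarrow> 'q \<Rightarrow> bool"

definition wf_nfa :: "('q, 'a) nfa \<Rightarrow> bool" where
  "wf_nfa A \<longleftrightarrow> finite (nfa_states A) \<and> nfa_init A \<subseteq> nfa_states A \<and>
     nfa_final A \<subseteq> nfa_states A \<and>
     (\<forall>p a q. nfa_trans A p a q \<longrightarrow> p \<in> nfa_states A \<and> q \<in> nfa_states A)"

fun is_path :: "('q, 'a) nfa \<Rightarrow> 'q list \<Rightarrow> 'a list \<Rightarrow> bool" where
  "is_path A [q] [] = (q \<in> nfa_states A)"
| "is_path A (p # q # qs) (a # u) = (p \<in> nfa_states A \<and> nfa_trans A p a q \<and> is_path A (q # qs) u)"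
| "is_path A _ _ = False"

definition successful_run :: "('q, 'a) nfa \<Rightarrow> 'q list \<Rightarrow> 'a list \<Rightarrow> bool" where
  "successful_run A qs u \<longleftrightarrow> is_path A qs u \<and> hd qs \<in> nfa_init A \<and> last qs \<in> nfa_final A"

definition nfa_lang :: "('q, 'a) nfa \<Rightarrow> 'a list set" where
  "nfa_lang A = {u. \<exists>qs. successful_run A qs u}"

definition unambiguous_nfa :: "('q, 'a) nfa \<Rightarrow> bool" where
  "unambiguous_nfa A \<longleftrightarrow> (\<forall>u qs qs'. successful_run A qs u \<and> successful_run A qs' u \<longrightarrow> qs = qs')"

text \<open>Transition monoid: the class of u under \<equiv> is represented by the relation
{(p,q). there is a run p \<rightarrow> q on u}; multiplication is relational composition.\<close>
definition trans_rel :: "('q, 'a) nfa \<Rightarrow> 'a list \<Rightarrow> ('q \<times> 'q) set" where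
  "trans_rel A u = {(p, q). \<exists>qs. is_path A qs u \<and> hd qs = p \<and> last qs = q}"

definition transition_monoid :: "('q, 'a) nfa \<Rightarrow> ('q \<times> 'q) set monoid" where
  "transition_monoid A = \<lparr>carrier = range (trans_rel A), mult = (\<lambda>R S. R O S),
      one = trans_rel A []\<rparr>"

definition V_automaton :: "(nat monoid \<Rightarrow> bool) \<Rightarrow> ('q, 'a) nfa \<Rightarrow> bool" where
  "V_automaton V A \<longleftrightarrow> (\<exists>M. V M \<and> M \<cong> transition_monoid A)"

definition V_language :: "(nat monoid \<Rightarrow> bool) \<Rightarrow> 'a list set \<Rightarrow> bool" where
  "V_language V L \<longleftrightarrow> (\<exists>A :: (nat, 'a) nfa. wf_nfa A \<and> V_automaton V A \<and> nfa_lang A = L)"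

record ('q, 'a, 'g) nft =
  nft_states :: "'q set"
  nft_init :: "'q \<Rightarrow> 'g list option"   \<comment> \<open>I = dom, output i\<close>
  nft_final :: "'q \<Rightarrow> 'g list option"  \<comment> \<open>F = dom, output t\<close>
  nft_delta :: "'q \<Rightarrow> 'a \<Rightarrow> 'q \<Rightarrow> 'g list option"

definition underlying :: "('q, 'a, 'g) nft \<Rightarrow> ('q, 'a) nfa" where
  "underlying T = \<lparr>nfa_states = nft_states T, nfa_init = dom (nft_init T),
     nfa_final = dom (nft_final T), nfa_trans = (\<lambda>p a q. nft_delta T p a q \<noteq> None)\<rparr>"

definition wf_nft :: "('q, 'a, 'g) nft \<Rightarrow> bool" where
  "wf_nft T \<longleftrightarrow> wf_nfa (underlying T)"

fun run_output :: "('q, 'a, 'g) nft \<Rightarrow> 'q list \<Rightarrow> 'a list \<Rightarrow> 'g list" where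
  "run_output T (p # q # qs) (a # u) = the (nft_delta T p a q) @ run_output T (q # qs) u"
| "run_output T _ _ = []"

definition nft_rel :: "('q, 'a, 'g) nft \<Rightarrow> ('a list \<times> 'g list) set" where
  "nft_rel T = {(u, w). \<exists>qs. successful_run (underlying T) qs u \<and>
      w = the (nft_init T (hd qs)) @ run_output T qs u @ the (nft_final T (last qs))}"

definition unambiguous_nft :: "('q, 'a, 'g) nft \<Rightarrow> bool" where
  "unambiguous_nft T \<longleftrightarrow> unambiguous_nfa (underlying T)"

definition V_nft :: "(nat monoid \<Rightarrow> bool) \<Rightarrow> ('q, 'a, 'g) nft \<Rightarrow> bool" where
  "V_nft V T \<longleftrightarrow> V_automaton V (underlying T)"

definition nft_defines :: "('q, 'a, 'g) nft \<Rightarrow> ('a list \<Rightarrow> 'g list option) \<Rightarrow> bool" where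
  "nft_defines T f \<longleftrightarrow> nft_rel T = {(u, w). f u = Some w}"

definition rational :: "('a list \<Rightarrow> 'g list option) \<Rightarrow> bool" where
  "rational f \<longleftrightarrow> (\<exists>T :: (nat, 'a, 'g) nft. wf_nft T \<and> nft_defines T f)"

text \<open>Completion: output alphabet \<Sigma> \<uplus> {\<bottom>} is 'a option, with \<bottom> = None.\<close>
definition completion :: "('a list \<Rightarrow> 'a list option) \<Rightarrow> 'a list \<Rightarrow> 'a option list option" where
  "completion f u = (case f u of Some w \<Rightarrow> Some (map Some w) | None \<Rightarrow> Some [None])"

end

theory Submission
  imports Defs "HOL-Library.Nat_Bijection"
begin


lemma is_path_len: "is_path A qs u \<Longrightarrow> length qs = Suc (length u)"
  by (induction A qs u rule: is_path.induct) auto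

lemma is_path_states: "is_path A qs u \<Longrightarrow> set qs \<subseteq> nfa_states A"
  by (induction A qs u rule: is_path.induct) auto

lemma is_path_Nil: "is_path A qs [] \<longleftrightarrow> (\<exists>q. qs = [q] \<and> q \<in> nfa_states A)"
  by (cases qs rule: remdups_adj.cases) auto

lemma is_path_Cons: "is_path A qs (a # u) \<longleftrightarrow>
   (\<exists>p q rs. qs = p # q # rs \<and> p \<in> nfa_states A \<and> nfa_trans A p a q \<and> is_path A (q # rs) u)"
  by (cases qs rule: remdups_adj.cases) auto

lemma is_path_append:
  "is_path A qs u \<Longrightarrow> is_path A (q # rs) v \<Longrightarrow> last qs = q \<Longrightarrow> is_path A (qs @ rs) (u @ v)"
  by (induction A qs u rule: is_path.induct) auto

lemma is_path_split:
  "is_path A qs (u @ v) \<Longrightarrow> \<exists>qs1 rs. qs = qs1 @ rs \<and> is_path A qs1 u \<and> is_path A (last qs1 # rs) v"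
proof (induction u arbitrary: qs)
  case Nil
  then obtain q rs where "qs = q # rs" by (cases qs) auto
  with Nil show ?case using is_path_states[OF Nil.prems]
    by (intro exI[of _ "[q]"] exI[of _ rs]) auto
next
  case (Cons a u)
  then obtain p q rs where qs: "qs = p # q # rs" "p \<in> nfa_states A" "nfa_trans A p a q"
     "is_path A (q # rs) (u @ v)" by (auto simp: is_path_Cons)
  from Cons.IH[OF qs(4)] obtain qs1 rs' where "q # rs = qs1 @ rs'" "is_path A qs1 u"
     "is_path A (last qs1 # rs') v" by blast
  moreover have "qs1 \<noteq> []" using \<open>is_path A qs1 u\<close> is_path_len by fastforce
  ultimately obtain t where t: "qs1 = q # t" by (cases qs1) auto
  show ?case using qs \<open>q # rs = qs1 @ rs'\<close> \<open>is_path A qs1 u\<close> \<open>is_path A (last qs1 # rs') v\<close> t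
    by (intro exI[of _ "p # qs1"] exI[of _ rs']) auto
qed

lemma is_path_hd_last_states: "is_path A qs u \<Longrightarrow> hd qs \<in> nfa_states A \<and> last qs \<in> nfa_states A"
  using is_path_states[of A qs u] is_path_len[of A qs u]
  by (cases qs) auto

lemma trans_rel_sub: "trans_rel A u \<subseteq> nfa_states A \<times> nfa_states A"
  unfolding trans_rel_def using is_path_hd_last_states by fastforce

lemma trans_rel_Nil: "trans_rel A [] = {(p, p) | p. p \<in> nfa_states A}"
  unfolding trans_rel_def by (auto simp: is_path_Nil)

lemma trans_rel_append: "trans_rel A (u @ v) = trans_rel A u O trans_rel A v"
proof
  show "trans_rel A (u @ v) \<subseteq> trans_rel A u O trans_rel A v"
  proof safe
    fix p q assume "(p, q) \<in> trans_rel A (u @ v)"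
    then obtain qs where qs: "is_path A qs (u @ v)" "hd qs = p" "last qs = q"
      unfolding trans_rel_def by auto
    from is_path_split[OF qs(1)] obtain qs1 rs where
      s: "qs = qs1 @ rs" "is_path A qs1 u" "is_path A (last qs1 # rs) v" by blast
    have ne: "qs1 \<noteq> []" using s(2) is_path_len by fastforce
    have "(p, last qs1) \<in> trans_rel A u" unfolding trans_rel_def using s ne qs by auto
    moreover have "(last qs1, q) \<in> trans_rel A v" unfolding trans_rel_def using s ne qs
      by (intro CollectI, simp, intro exI[of _ "last qs1 # rs"]) (auto simp: last_append)
    ultimately show "(p, q) \<in> trans_rel A u O trans_rel A v" by blast
  qed
next
  show "trans_rel A u O trans_rel A v \<subseteq> trans_rel A (u @ v)"
  proof safe
    fix p r q assume "(p, r) \<in> trans_rel A u" "(r, q) \<in> trans_rel A v"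
    then obtain qs1 qs2 where a: "is_path A qs1 u" "hd qs1 = p" "last qs1 = r"
      and b: "is_path A qs2 v" "hd qs2 = r" "last qs2 = q" unfolding trans_rel_def by auto
    obtain rs where qs2: "qs2 = r # rs" using b is_path_len by (cases qs2) auto
    have ne: "qs1 \<noteq> []" using a is_path_len by fastforce
    have "is_path A (qs1 @ rs) (u @ v)" using is_path_append[OF a(1), of r rs v] b qs2 a by auto
    then show "(p, q) \<in> trans_rel A (u @ v)" unfolding trans_rel_def using a b qs2 ne
      by (intro CollectI, simp, intro exI[of _ "qs1 @ rs"]) (cases rs, auto simp: last_append)
  qed
qed

lemma monoid_TM: "monoid (transition_monoid A)"
proof -
  have l: "trans_rel A [] O trans_rel A u = trans_rel A u" for u
    by (simp add: trans_rel_append[symmetric])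
  have r: "trans_rel A u O trans_rel A [] = trans_rel A u" for u
    by (simp add: trans_rel_append[symmetric])
  show ?thesis
    unfolding monoid_def transition_monoid_def
    apply (auto simp: trans_rel_append[symmetric] O_assoc)
    using l r by blast+
qed

lemma finite_TM: "finite (nfa_states A) \<Longrightarrow> finite (carrier (transition_monoid A))"
  unfolding transition_monoid_def
  by (rule finite_subset[of _ "Pow (nfa_states A \<times> nfa_states A)"]) (auto dest: subsetD[OF trans_rel_sub])



lemma iso_sym_gen:
  assumes "h \<in> iso G H" "monoid G"
  shows "inv_into (carrier G) h \<in> iso H G"
proof -
  interpret G: monoid G by fact
  have h: "h \<in> hom G H" "bij_betw h (carrier G) (carrier H)"
    using assms by (auto simp add: iso_def)
  then have HG: "bij_betw (inv_into (carrier G) h) (carrier H) (carrier G)"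
    by (simp add: bij_betw_inv_into)
  have *: "\<And>x. x \<in> carrier H \<Longrightarrow> inv_into (carrier G) h x \<in> carrier G"
    by (meson HG bij_betwE)
  have "inv_into (carrier G) h \<in> hom H G"
  proof (rule homI)
    show "\<And>x. x \<in> carrier H \<Longrightarrow> inv_into (carrier G) h x \<in> carrier G" by (rule *)
    show "inv_into (carrier G) h (x \<otimes>\<^bsub>H\<^esub> y) = inv_into (carrier G) h x \<otimes>\<^bsub>G\<^esub> inv_into (carrier G) h y"
      if "x \<in> carrier H" "y \<in> carrier H" for x y
    proof (rule inv_into_f_eq)
      show "inj_on h (carrier G)"
        using bij_betw_def h(2) by blast
      show "inv_into (carrier G) h x \<otimes>\<^bsub>G\<^esub> inv_into (carrier G) h y \<in> carrier G"
        using * that by simp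
      show "h (inv_into (carrier G) h x \<otimes>\<^bsub>G\<^esub> inv_into (carrier G) h y) = x \<otimes>\<^bsub>H\<^esub> y"
        using h bij_betw_inv_into_right [of h] unfolding hom_def by (simp add: "*" that)
    qed
  qed
  then show ?thesis
    by (simp add: Group.iso_def bij_betw_inv_into h)
qed

lemma iso_one_gen:
  assumes "monoid G" "monoid H" "h \<in> iso G H"
  shows "h \<one>\<^bsub>G\<^esub> = \<one>\<^bsub>H\<^esub>"
proof -
  interpret G: monoid G by fact
  interpret H: monoid H by fact
  have hh: "h \<in> hom G H" "h ` carrier G = carrier H" using assms(3) unfolding iso_iff by auto
  have "\<one>\<^bsub>H\<^esub> \<in> h ` carrier G" using hh(2) H.one_closed by simp
  then obtain x where x1: "x \<in> carrier G" and x2: "\<one>\<^bsub>H\<^esub> = h x" by (rule imageE)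
  have c: "h \<one>\<^bsub>G\<^esub> \<in> carrier H" by (rule hom_in_carrier[OF hh(1) G.one_closed])
  have m: "h (\<one>\<^bsub>G\<^esub> \<otimes>\<^bsub>G\<^esub> x) = h \<one>\<^bsub>G\<^esub> \<otimes>\<^bsub>H\<^esub> h x"
    using hh(1) x1 G.one_closed unfolding hom_def by blast
  have "h \<one>\<^bsub>G\<^esub> = h \<one>\<^bsub>G\<^esub> \<otimes>\<^bsub>H\<^esub> \<one>\<^bsub>H\<^esub>" using c by (rule H.r_one[symmetric])
  also have "\<dots> = h \<one>\<^bsub>G\<^esub> \<otimes>\<^bsub>H\<^esub> h x" by (simp only: x2)
  also have "\<dots> = h (\<one>\<^bsub>G\<^esub> \<otimes>\<^bsub>G\<^esub> x)" by (rule m[symmetric])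
  also have "\<dots> = h x" using x1 by (simp only: G.l_one)
  also have "\<dots> = \<one>\<^bsub>H\<^esub>" by (rule x2[symmetric])
  finally show ?thesis .
qed

definition mcopy :: "('b, 'c) monoid_scheme \<Rightarrow> ('b \<Rightarrow> nat) \<Rightarrow> nat monoid" where
  "mcopy G e = \<lparr>carrier = e ` carrier G,
     mult = (\<lambda>x y. e (inv_into (carrier G) e x \<otimes>\<^bsub>G\<^esub> inv_into (carrier G) e y)),
     one = e \<one>\<^bsub>G\<^esub>\<rparr>"

lemma mcopy_monoid:
  assumes "monoid G" "inj_on e (carrier G)"
  shows "monoid (mcopy G e)"
proof -
  interpret G: monoid G by fact
  have ii: "inv_into (carrier G) e (e a) = a" if "a \<in> carrier G" for a
    using assms(2) that by (rule inv_into_f_f)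
  show ?thesis
  proof (rule monoidI)
    fix x y z assume "x \<in> carrier (mcopy G e)" "y \<in> carrier (mcopy G e)" "z \<in> carrier (mcopy G e)"
    then obtain a b c where abc: "x = e a" "y = e b" "z = e c" "a \<in> carrier G" "b \<in> carrier G" "c \<in> carrier G"
      by (auto simp: mcopy_def)
    show "x \<otimes>\<^bsub>mcopy G e\<^esub> y \<otimes>\<^bsub>mcopy G e\<^esub> z = x \<otimes>\<^bsub>mcopy G e\<^esub> (y \<otimes>\<^bsub>mcopy G e\<^esub> z)"
      using abc by (simp add: mcopy_def ii G.m_assoc)
  next
    fix x y assume "x \<in> carrier (mcopy G e)" "y \<in> carrier (mcopy G e)"
    then obtain a b where abc: "x = e a" "y = e b" "a \<in> carrier G" "b \<in> carrier G"
      by (auto simp: mcopy_def)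
    show "x \<otimes>\<^bsub>mcopy G e\<^esub> y \<in> carrier (mcopy G e)"
      using abc by (simp add: mcopy_def ii)
  next
    show "\<one>\<^bsub>mcopy G e\<^esub> \<in> carrier (mcopy G e)" by (simp add: mcopy_def)
  next
    fix x assume "x \<in> carrier (mcopy G e)"
    then obtain a where abc: "x = e a" "a \<in> carrier G" by (auto simp: mcopy_def)
    show "\<one>\<^bsub>mcopy G e\<^esub> \<otimes>\<^bsub>mcopy G e\<^esub> x = x" using abc by (simp add: mcopy_def ii)
    show "x \<otimes>\<^bsub>mcopy G e\<^esub> \<one>\<^bsub>mcopy G e\<^esub> = x" using abc by (simp add: mcopy_def ii)
  qed
qed

lemma mcopy_iso:
  assumes "monoid G" "inj_on e (carrier G)"
  shows "e \<in> iso G (mcopy G e)"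
proof -
  interpret G: monoid G by fact
  have ii: "inv_into (carrier G) e (e a) = a" if "a \<in> carrier G" for a
    using assms(2) that by (rule inv_into_f_f)
  have "e \<in> hom G (mcopy G e)"
    by (rule homI) (simp_all add: mcopy_def ii)
  then show ?thesis unfolding iso_iff using assms(2) by (simp add: mcopy_def)
qed

lemma mcopy_is_iso:
  assumes "monoid G" "inj_on e (carrier G)"
  shows "mcopy G e \<cong> G"
  using iso_sym_gen[OF mcopy_iso[OF assms] assms(1)] by (rule is_isoI)

lemma var_monoid: "monoid_variety V \<Longrightarrow> V M \<Longrightarrow> monoid M"
  unfolding monoid_variety_def by blast

lemma var_sub: "monoid_variety V \<Longrightarrow> V M \<Longrightarrow> submonoid H M \<Longrightarrow> V (M\<lparr>carrier := H\<rparr>)"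
  unfolding monoid_variety_def by blast

lemma var_hom: "monoid_variety V \<Longrightarrow> V M \<Longrightarrow> monoid N \<Longrightarrow> h \<in> hom M N \<Longrightarrow> h \<one>\<^bsub>M\<^esub> = \<one>\<^bsub>N\<^esub>
   \<Longrightarrow> h ` carrier M = carrier N \<Longrightarrow> V N"
  unfolding monoid_variety_def by blast

lemma var_prod: "monoid_variety V \<Longrightarrow> V M \<Longrightarrow> V N \<Longrightarrow> monoid P \<Longrightarrow> P \<cong> (M \<times>\<times> N) \<Longrightarrow> V P"
  unfolding monoid_variety_def by blast

lemma V_closed:
  fixes A1 :: "('q1, 'a) nfa" and A2 :: "('q2, 'a) nfa" and B :: "('q, 'a) nfa"
  assumes V: "monoid_variety V" and VA1: "V_automaton V A1" and VA2: "V_automaton V A2"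
    and fin: "finite (nfa_states B)"
    and det: "\<And>u v. trans_rel A1 u = trans_rel A1 v \<Longrightarrow> trans_rel A2 u = trans_rel A2 v
                 \<Longrightarrow> trans_rel B u = trans_rel B v"
  shows "V_automaton V B"
proof -
  obtain M1 h1 where M1: "V M1" "h1 \<in> iso M1 (transition_monoid A1)"
    using VA1 unfolding V_automaton_def is_iso_def by blast
  obtain M2 h2 where M2: "V M2" "h2 \<in> iso M2 (transition_monoid A2)"
    using VA2 unfolding V_automaton_def is_iso_def by blast
  have mon1: "monoid M1" by (rule var_monoid[OF V M1(1)])
  have mon2: "monoid M2" by (rule var_monoid[OF V M2(1)])
  define p1 where "p1 = inv_into (carrier M1) h1"
  define p2 where "p2 = inv_into (carrier M2) h2"
  have p1: "p1 \<in> iso (transition_monoid A1) M1" unfolding p1_def by (rule iso_sym_gen[OF M1(2) mon1])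
  have p2: "p2 \<in> iso (transition_monoid A2) M2" unfolding p2_def by (rule iso_sym_gen[OF M2(2) mon2])
  have tc1: "trans_rel A1 u \<in> carrier (transition_monoid A1)" for u by (simp add: transition_monoid_def)
  have tc2: "trans_rel A2 u \<in> carrier (transition_monoid A2)" for u by (simp add: transition_monoid_def)
  have tm1: "trans_rel A1 u \<otimes>\<^bsub>transition_monoid A1\<^esub> trans_rel A1 v = trans_rel A1 (u @ v)" for u v
    by (simp add: transition_monoid_def trans_rel_append)
  have tm2: "trans_rel A2 u \<otimes>\<^bsub>transition_monoid A2\<^esub> trans_rel A2 v = trans_rel A2 (u @ v)" for u v
    by (simp add: transition_monoid_def trans_rel_append)
  have hp1: "p1 \<in> hom (transition_monoid A1) M1" by (rule iso_imp_homomorphism[OF p1])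
  have hp2: "p2 \<in> hom (transition_monoid A2) M2" by (rule iso_imp_homomorphism[OF p2])
  have p1c: "p1 (trans_rel A1 u) \<in> carrier M1" for u by (rule hom_in_carrier[OF hp1 tc1])
  have p2c: "p2 (trans_rel A2 u) \<in> carrier M2" for u by (rule hom_in_carrier[OF hp2 tc2])
  have p1m: "p1 (trans_rel A1 (u @ v)) = p1 (trans_rel A1 u) \<otimes>\<^bsub>M1\<^esub> p1 (trans_rel A1 v)" for u v
    using hom_mult[OF hp1 tc1 tc1, of u v] by (simp only: tm1)
  have p2m: "p2 (trans_rel A2 (u @ v)) = p2 (trans_rel A2 u) \<otimes>\<^bsub>M2\<^esub> p2 (trans_rel A2 v)" for u v
    using hom_mult[OF hp2 tc2 tc2, of u v] by (simp only: tm2)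
  have p1o: "p1 (trans_rel A1 []) = \<one>\<^bsub>M1\<^esub>"
    using iso_one_gen[OF monoid_TM mon1 p1] by (simp add: transition_monoid_def)
  have p2o: "p2 (trans_rel A2 []) = \<one>\<^bsub>M2\<^esub>"
    using iso_one_gen[OF monoid_TM mon2 p2] by (simp add: transition_monoid_def)
  have ip1: "inj_on p1 (carrier (transition_monoid A1))" using p1 unfolding iso_iff by blast
  have ip2: "inj_on p2 (carrier (transition_monoid A2))" using p2 unfolding iso_iff by blast
  have p1i: "p1 (trans_rel A1 u) = p1 (trans_rel A1 v) \<Longrightarrow> trans_rel A1 u = trans_rel A1 v" for u v
    by (rule inj_onD[OF ip1 _ tc1 tc1])
  have p2i: "p2 (trans_rel A2 u) = p2 (trans_rel A2 v) \<Longrightarrow> trans_rel A2 u = trans_rel A2 v" for u v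
    by (rule inj_onD[OF ip2 _ tc2 tc2])
  define D where "D = M1 \<times>\<times> M2"
  have monD: "monoid D" unfolding D_def by (rule DirProd_monoid[OF mon1 mon2])
  define P where "P = mcopy D prod_encode"
  have injP: "inj_on prod_encode (carrier D)" by (rule inj_prod_encode)
  have monP: "monoid P" unfolding P_def by (rule mcopy_monoid[OF monD injP])
  have VP: "V P" using var_prod[OF V M1(1) M2(1) monP] mcopy_is_iso[OF monD injP]
    unfolding P_def D_def by blast
  define g where "g u = prod_encode (p1 (trans_rel A1 u), p2 (trans_rel A2 u))" for u
  define H where "H = range g"
  have iP: "inv_into (carrier M1 \<times> carrier M2) prod_encode (prod_encode (x, y)) = (x, y)"
    if "x \<in> carrier M1" "y \<in> carrier M2" for x y
    using inv_into_f_f[OF inj_prod_encode, of "(x, y)" "carrier M1 \<times> carrier M2"] that by simp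
  have gm: "g u \<otimes>\<^bsub>P\<^esub> g v = g (u @ v)" for u v
    unfolding P_def mcopy_def g_def D_def using p1c p2c
    by (simp add: iP DirProd_def p1m p2m)
  have go: "\<one>\<^bsub>P\<^esub> = g []" unfolding P_def mcopy_def g_def D_def
    by (simp add: DirProd_def p1o p2o)
  have sub: "submonoid H P"
  proof
    show "H \<subseteq> carrier P" unfolding H_def P_def mcopy_def D_def g_def using p1c p2c
      by (auto simp: DirProd_def)
    show "x \<otimes>\<^bsub>P\<^esub> y \<in> H" if "x \<in> H" "y \<in> H" for x y using that gm unfolding H_def by auto
    show "\<one>\<^bsub>P\<^esub> \<in> H" using go unfolding H_def by auto
  qed
  define Q where "Q = P\<lparr>carrier := H\<rparr>"
  have VQ: "V Q" unfolding Q_def by (rule var_sub[OF V VP sub])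
  define TB where "TB = transition_monoid B"
  have finTB: "finite (carrier TB)" unfolding TB_def by (rule finite_TM[OF fin])
  obtain e :: "_ \<Rightarrow> nat" where e: "inj_on e (carrier TB)"
    using finite_imp_inj_to_nat_seg[OF finTB] by blast
  define G where "G = mcopy TB e"
  have monTB: "monoid TB" unfolding TB_def by (rule monoid_TM)
  have monG: "monoid G" unfolding G_def by (rule mcopy_monoid[OF monTB e])
  define h where "h x = e (trans_rel B (inv_into UNIV g x))" for x
  have gi: "g u = g v \<Longrightarrow> trans_rel B u = trans_rel B v" for u v
  proof -
    assume "g u = g v"
    then have "p1 (trans_rel A1 u) = p1 (trans_rel A1 v)" "p2 (trans_rel A2 u) = p2 (trans_rel A2 v)"
      unfolding g_def by (simp_all add: prod_encode_eq)
    then show ?thesis by (intro det p1i p2i)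
  qed
  have hg: "h (g u) = e (trans_rel B u)" for u
    unfolding h_def by (rule arg_cong[where f = e], rule gi, rule f_inv_into_f) auto
  have eTB: "inv_into (carrier TB) e (e (trans_rel B u)) = trans_rel B u" for u
    using e by (simp add: inv_into_f_f TB_def transition_monoid_def)
  have hom: "h \<in> hom Q G"
  proof (rule homI)
    show "h x \<in> carrier G" if "x \<in> carrier Q" for x
      using that unfolding Q_def H_def G_def mcopy_def TB_def transition_monoid_def
      by (auto simp: hg)
    show "h (x \<otimes>\<^bsub>Q\<^esub> y) = h x \<otimes>\<^bsub>G\<^esub> h y" if "x \<in> carrier Q" "y \<in> carrier Q" for x y
    proof -
      have "x \<in> range g" "y \<in> range g" using that by (simp_all add: Q_def H_def)
      then obtain u v where "x = g u" "y = g v" by blast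
      then show ?thesis unfolding Q_def using gm
        by (simp add: hg G_def mcopy_def eTB trans_rel_append, simp add: TB_def transition_monoid_def)
    qed
  qed
  have ho: "h \<one>\<^bsub>Q\<^esub> = \<one>\<^bsub>G\<^esub>"
    unfolding Q_def using go by (simp add: hg G_def mcopy_def TB_def transition_monoid_def)
  have hs: "h ` carrier Q = carrier G"
    unfolding Q_def H_def G_def mcopy_def TB_def transition_monoid_def
    by (auto simp: hg image_image)
  have VG: "V G" by (rule var_hom[OF V VQ monG hom ho hs])
  have "G \<cong> TB" unfolding G_def by (rule mcopy_is_iso[OF monTB e])
  then show ?thesis unfolding V_automaton_def TB_def using VG by blast
qed



definition dfa :: "nat set \<Rightarrow> nat set \<Rightarrow> nat set \<Rightarrow> (nat \<Rightarrow> 'a \<Rightarrow> nat) \<Rightarrow> (nat, 'a) nfa" where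
  "dfa Q I F d = \<lparr>nfa_states = Q, nfa_init = I, nfa_final = F, nfa_trans = (\<lambda>p a q. p \<in> Q \<and> q = d p a)\<rparr>"

lemma dfa_sel[simp]: "nfa_states (dfa Q I F d) = Q" "nfa_init (dfa Q I F d) = I"
  "nfa_final (dfa Q I F d) = F" "nfa_trans (dfa Q I F d) p a q = (p \<in> Q \<and> q = d p a)"
  by (simp_all add: dfa_def)

lemma dfa_path_last: "is_path (dfa Q I F d) qs u \<Longrightarrow> last qs = foldl d (hd qs) u"
proof (induction u arbitrary: qs)
  case Nil then show ?case by (auto simp: is_path_Nil)
next
  case (Cons a u)
  then obtain p rs where qs: "qs = p # d p a # rs" "is_path (dfa Q I F d) (d p a # rs) u"
    by (auto simp: is_path_Cons)
  from Cons.IH[OF qs(2)] show ?case using qs(1) by simp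
qed

lemma dfa_path_unique: "is_path (dfa Q I F d) qs u \<Longrightarrow> is_path (dfa Q I F d) qs' u \<Longrightarrow> hd qs = hd qs' \<Longrightarrow> qs = qs'"
proof (induction u arbitrary: qs qs')
  case Nil then show ?case by (auto simp: is_path_Nil)
next
  case (Cons a u)
  then obtain p rs p' rs' where qs: "qs = p # d p a # rs" "is_path (dfa Q I F d) (d p a # rs) u"
    "qs' = p' # d p' a # rs'" "is_path (dfa Q I F d) (d p' a # rs') u"
    by (auto simp: is_path_Cons)
  with Cons.prems(3) have "p = p'" by simp
  with Cons.IH[OF qs(2) qs(4)] show ?case using qs(1,3) by simp
qed

lemma dfa_path_exists:
  assumes cl: "\<And>p a. p \<in> Q \<Longrightarrow> d p a \<in> Q"
  shows "p \<in> Q \<Longrightarrow> \<exists>qs. is_path (dfa Q I F d) qs u \<and> hd qs = p"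
proof (induction u arbitrary: p)
  case Nil then show ?case by (auto simp: is_path_Nil)
next
  case (Cons a u)
  then obtain qs where "is_path (dfa Q I F d) qs u" "hd qs = d p a" using cl by blast
  moreover then obtain rs where "qs = d p a # rs" using is_path_len by (cases qs) auto
  ultimately show ?case using Cons.prems by (intro exI[of _ "p # qs"]) (auto simp: is_path_Cons)
qed

lemma dfa_trans_rel:
  assumes cl: "\<And>p a. p \<in> Q \<Longrightarrow> d p a \<in> Q"
  shows "trans_rel (dfa Q I F d) u = {(p, foldl d p u) | p. p \<in> Q}"
proof safe
  fix p q assume "(p, q) \<in> trans_rel (dfa Q I F d) u"
  then obtain qs where "is_path (dfa Q I F d) qs u" "hd qs = p" "last qs = q" unfolding trans_rel_def by auto
  then show "\<exists>p'. (p, q) = (p', foldl d p' u) \<and> p' \<in> Q"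
    using dfa_path_last is_path_hd_last_states by fastforce
next
  fix p assume "p \<in> Q"
  then obtain qs where "is_path (dfa Q I F d) qs u" "hd qs = p" using dfa_path_exists[where Q=Q and d=d, OF cl] by blast
  then show "(p, foldl d p u) \<in> trans_rel (dfa Q I F d) u"
    unfolding trans_rel_def using dfa_path_last by fastforce
qed

lemma dfa_lang:
  assumes cl: "\<And>p a. p \<in> Q \<Longrightarrow> d p a \<in> Q" and "I = {i}" "i \<in> Q"
  shows "u \<in> nfa_lang (dfa Q I F d) \<longleftrightarrow> foldl d i u \<in> F"
proof
  assume "u \<in> nfa_lang (dfa Q I F d)"
  then show "foldl d i u \<in> F" using assms dfa_path_last
    unfolding nfa_lang_def successful_run_def by fastforce
next
  assume "foldl d i u \<in> F"
  moreover obtain qs where "is_path (dfa Q I F d) qs u" "hd qs = i" using dfa_path_exists[where Q=Q and d=d and I=I and F=F, OF cl assms(3)] by blast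
  ultimately show "u \<in> nfa_lang (dfa Q I F d)" using assms dfa_path_last
    unfolding nfa_lang_def successful_run_def by fastforce
qed

lemma dfa_unamb: "I = {i} \<Longrightarrow> unambiguous_nfa (dfa Q I F d)"
  unfolding unambiguous_nfa_def successful_run_def using dfa_path_unique by fastforce

lemma dfa_wf: "finite Q \<Longrightarrow> I \<subseteq> Q \<Longrightarrow> F \<subseteq> Q \<Longrightarrow> (\<And>p a. p \<in> Q \<Longrightarrow> d p a \<in> Q) \<Longrightarrow> wf_nfa (dfa Q I F d)"
  unfolding wf_nfa_def by auto

section \<open>Subset automaton\<close>

definition sstep :: "(nat, 'a) nfa \<Rightarrow> nat \<Rightarrow> 'a \<Rightarrow> nat" where
  "sstep A x a = set_encode (trans_rel A [a] `` set_decode x)"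

definition sQ :: "(nat, 'a) nfa \<Rightarrow> nat set" where
  "sQ A = set_encode ` Pow (nfa_states A)"

lemma sstep_cl: "finite (nfa_states A) \<Longrightarrow> p \<in> sQ A \<Longrightarrow> sstep A p a \<in> sQ A"
  unfolding sQ_def sstep_def using trans_rel_sub[of A "[a]"]
  by (auto intro!: imageI simp: finite_subset)

lemma sstep_foldl:
  assumes "finite (nfa_states A)" "S \<subseteq> nfa_states A"
  shows "foldl (sstep A) (set_encode S) u = set_encode (trans_rel A u `` S)"
  using assms(2)
proof (induction u arbitrary: S)
  case Nil
  then show ?case by (auto simp: trans_rel_Nil intro!: arg_cong[where f=set_encode])
next
  case (Cons a u)
  have fin: "finite S" using Cons.prems assms(1) finite_subset by blast
  have sub: "trans_rel A [a] `` S \<subseteq> nfa_states A" using trans_rel_sub[of A "[a]"] by auto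
  have "foldl (sstep A) (set_encode S) (a # u) = foldl (sstep A) (set_encode (trans_rel A [a] `` S)) u"
    by (simp add: sstep_def fin)
  also have "\<dots> = set_encode (trans_rel A u `` (trans_rel A [a] `` S))" using Cons.IH[OF sub] .
  also have "trans_rel A u `` (trans_rel A [a] `` S) = trans_rel A (a # u) `` S"
    using trans_rel_append[of A "[a]" u] by auto
  finally show ?case .
qed

definition sdfa :: "(nat, 'a) nfa \<Rightarrow> bool \<Rightarrow> (nat, 'a) nfa" where
  "sdfa A b = dfa (sQ A) {set_encode (nfa_init A)}
      {x \<in> sQ A. (set_decode x \<inter> nfa_final A \<noteq> {}) = b} (sstep A)"

lemma sdfa_wf: "wf_nfa A \<Longrightarrow> wf_nfa (sdfa A b)"
  unfolding sdfa_def wf_nfa_def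
  apply (intro dfa_wf[unfolded wf_nfa_def])
  by (auto simp: sQ_def intro: sstep_cl[unfolded sQ_def])

lemma sdfa_unamb: "unambiguous_nfa (sdfa A b)"
  unfolding sdfa_def by (rule dfa_unamb) simp

lemma sdfa_lang:
  assumes "wf_nfa A"
  shows "u \<in> nfa_lang (sdfa A b) \<longleftrightarrow> (u \<in> nfa_lang A) = b"
proof -
  have fin: "finite (nfa_states A)" and ii: "nfa_init A \<subseteq> nfa_states A" and ff: "nfa_final A \<subseteq> nfa_states A"
    using assms by (auto simp: wf_nfa_def)
  have fin2: "finite (trans_rel A u `` nfa_init A)"
    using trans_rel_sub[of A u] fin by (auto intro: finite_subset)
  have "u \<in> nfa_lang (sdfa A b) \<longleftrightarrow> foldl (sstep A) (set_encode (nfa_init A)) u \<in>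
      {x \<in> sQ A. (set_decode x \<inter> nfa_final A \<noteq> {}) = b}"
    unfolding sdfa_def using sstep_cl[OF fin] ii by (intro dfa_lang) (auto simp: sQ_def)
  also have "\<dots> \<longleftrightarrow> ((trans_rel A u `` nfa_init A) \<inter> nfa_final A \<noteq> {}) = b"
    using sstep_foldl[OF fin ii] fin2 trans_rel_sub[of A u] by (auto simp: sQ_def)
  also have "((trans_rel A u `` nfa_init A) \<inter> nfa_final A \<noteq> {}) \<longleftrightarrow> u \<in> nfa_lang A"
    unfolding nfa_lang_def successful_run_def trans_rel_def by blast
  finally show ?thesis .
qed

lemma sdfa_V:
  assumes "monoid_variety V" "wf_nfa A" "V_automaton V A"
  shows "V_automaton V (sdfa A b)"
proof (rule V_closed[OF assms(1) assms(3) assms(3)])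
  have fin: "finite (nfa_states A)" using assms by (auto simp: wf_nfa_def)
  show "finite (nfa_states (sdfa A b))" using sdfa_wf[OF assms(2)] by (simp add: wf_nfa_def)
  fix u v assume eq: "trans_rel A u = trans_rel A v"
  have "foldl (sstep A) p u = foldl (sstep A) p v" if "p \<in> sQ A" for p
    using that sstep_foldl[OF fin] eq by (auto simp: sQ_def)
  then show "trans_rel (sdfa A b) u = trans_rel (sdfa A b) v"
    unfolding sdfa_def using sstep_cl[OF fin] by (auto simp: dfa_trans_rel)
qed



section \<open>Union transducer\<close>

definition unft :: "(nat, 'a, 'a) nft \<Rightarrow> (nat, 'a) nfa \<Rightarrow> (nat, 'a, 'a option) nft" where
  "unft T D = \<lparr>nft_states = {x. (even x \<and> x div 2 \<in> nft_states T) \<or> (odd x \<and> x div 2 \<in> nfa_states D)},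
     nft_init = (\<lambda>p. if even p then map_option (map Some) (nft_init T (p div 2))
                     else if p div 2 \<in> nfa_init D then Some [] else None),
     nft_final = (\<lambda>p. if even p then map_option (map Some) (nft_final T (p div 2))
                     else if p div 2 \<in> nfa_final D then Some [None] else None),
     nft_delta = (\<lambda>p a q. if even p \<and> even q then map_option (map Some) (nft_delta T (p div 2) a (q div 2))
                     else if odd p \<and> odd q \<and> nfa_trans D (p div 2) a (q div 2) then Some [] else None)\<rparr>"

lemma unft_sel:
  "x \<in> nfa_states (underlying (unft T D)) \<longleftrightarrow> (even x \<and> x div 2 \<in> nft_states T) \<or> (odd x \<and> x div 2 \<in> nfa_states D)"
  "x \<in> nfa_init (underlying (unft T D)) \<longleftrightarrow> (even x \<and> x div 2 \<in> dom (nft_init T)) \<or> (odd x \<and> x div 2 \<in> nfa_init D)"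
  "x \<in> nfa_final (underlying (unft T D)) \<longleftrightarrow> (even x \<and> x div 2 \<in> dom (nft_final T)) \<or> (odd x \<and> x div 2 \<in> nfa_final D)"
  "nfa_trans (underlying (unft T D)) p a q \<longleftrightarrow>
     (even p \<and> even q \<and> nft_delta T (p div 2) a (q div 2) \<noteq> None) \<or>
     (odd p \<and> odd q \<and> nfa_trans D (p div 2) a (q div 2))"
  by (auto simp: unft_def underlying_def split: if_splits)

lemma unft_path_even:
  "is_path (underlying T) ps u \<Longrightarrow> is_path (underlying (unft T D)) (map (\<lambda>q. 2*q) ps) u"
  by (induction "underlying T" ps u rule: is_path.induct)
     (auto simp: unft_sel, auto simp: underlying_def)

lemma unft_path_odd:
  "is_path D ps u \<Longrightarrow> is_path (underlying (unft T D)) (map (\<lambda>q. 2*q+1) ps) u"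
  by (induction D ps u rule: is_path.induct) (auto simp: unft_sel)

lemma unft_path_back:
  "is_path (underlying (unft T D)) qs u \<Longrightarrow>
    (even (hd qs) \<and> (\<forall>q\<in>set qs. even q) \<and> is_path (underlying T) (map (\<lambda>q. q div 2) qs) u) \<or>
    (odd (hd qs) \<and> (\<forall>q\<in>set qs. odd q) \<and> is_path D (map (\<lambda>q. q div 2) qs) u)"
proof (induction u arbitrary: qs)
  case Nil
  then obtain q where q: "qs = [q]" "q \<in> nfa_states (underlying (unft T D))" by (auto simp: is_path_Nil)
  then show ?case by (auto simp: unft_sel, auto simp: underlying_def)
next
  case (Cons a u)
  then obtain p q rs where qs: "qs = p # q # rs" "p \<in> nfa_states (underlying (unft T D))"
    "nfa_trans (underlying (unft T D)) p a q" "is_path (underlying (unft T D)) (q # rs) u"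
    by (auto simp: is_path_Cons)
  from Cons.IH[OF qs(4)] qs(2,3) show ?case unfolding qs
    by (auto simp: unft_sel, auto simp: underlying_def)
qed

lemma run_output_unft_even:
  "is_path (underlying T) ps u \<Longrightarrow> run_output (unft T D) (map (\<lambda>q. 2*q) ps) u = map Some (run_output T ps u)"
  by (induction T ps u rule: run_output.induct) (auto simp: unft_def underlying_def)

lemma run_output_unft_odd:
  "is_path D ps u \<Longrightarrow> run_output (unft T D) (map (\<lambda>q. 2*q+1) ps) u = []"
  by (induction D ps u rule: is_path.induct) (auto simp: unft_def)


lemma path_ne: "is_path A qs u \<Longrightarrow> qs \<noteq> []"
  using is_path_len by fastforce

lemma map_div2_even: "\<forall>q\<in>set (qs::nat list). even q \<Longrightarrow> map (\<lambda>q. 2*q) (map (\<lambda>q. q div 2) qs) = qs"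
  by (induction qs) auto

lemma map_div2_odd: "\<forall>q\<in>set (qs::nat list). odd q \<Longrightarrow> map (\<lambda>q. 2*q+1) (map (\<lambda>q. q div 2) qs) = qs"
  by (induction qs) auto

lemma unft_trans_rel:
  "(p, q) \<in> trans_rel (underlying (unft T D)) u \<longleftrightarrow>
   (even p \<and> even q \<and> (p div 2, q div 2) \<in> trans_rel (underlying T) u) \<or>
   (odd p \<and> odd q \<and> (p div 2, q div 2) \<in> trans_rel D u)"
proof
  assume "(p, q) \<in> trans_rel (underlying (unft T D)) u"
  then obtain qs where qs: "is_path (underlying (unft T D)) qs u" "hd qs = p" "last qs = q"
    unfolding trans_rel_def by auto
  have ne: "qs \<noteq> []" using path_ne[OF qs(1)] .
  have lq: "last qs \<in> set qs" using ne by simp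
  from unft_path_back[OF qs(1)] show "(even p \<and> even q \<and> (p div 2, q div 2) \<in> trans_rel (underlying T) u) \<or>
   (odd p \<and> odd q \<and> (p div 2, q div 2) \<in> trans_rel D u)"
  proof
    assume h: "even (hd qs) \<and> (\<forall>q\<in>set qs. even q) \<and> is_path (underlying T) (map (\<lambda>q. q div 2) qs) u"
    then show ?thesis using qs ne lq unfolding trans_rel_def by (auto simp: hd_map last_map)
  next
    assume h: "odd (hd qs) \<and> (\<forall>q\<in>set qs. odd q) \<and> is_path D (map (\<lambda>q. q div 2) qs) u"
    then show ?thesis using qs ne lq unfolding trans_rel_def by (auto simp: hd_map last_map)
  qed
next
  assume "(even p \<and> even q \<and> (p div 2, q div 2) \<in> trans_rel (underlying T) u) \<or>
   (odd p \<and> odd q \<and> (p div 2, q div 2) \<in> trans_rel D u)"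
  then show "(p, q) \<in> trans_rel (underlying (unft T D)) u"
  proof
    assume h: "even p \<and> even q \<and> (p div 2, q div 2) \<in> trans_rel (underlying T) u"
    then obtain ps where ps: "is_path (underlying T) ps u" "hd ps = p div 2" "last ps = q div 2"
      unfolding trans_rel_def by auto
    have ne: "ps \<noteq> []" using path_ne[OF ps(1)] .
    show ?thesis using unft_path_even[OF ps(1), of D] ps ne h unfolding trans_rel_def
      by (intro CollectI, simp, intro exI[of _ "map (\<lambda>q. 2*q) ps"]) (auto simp: hd_map last_map)
  next
    assume h: "odd p \<and> odd q \<and> (p div 2, q div 2) \<in> trans_rel D u"
    then obtain ps where ps: "is_path D ps u" "hd ps = p div 2" "last ps = q div 2"
      unfolding trans_rel_def by auto
    have ne: "ps \<noteq> []" using path_ne[OF ps(1)] .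
    show ?thesis using unft_path_odd[OF ps(1), of T] ps ne h unfolding trans_rel_def
      by (intro CollectI, simp, intro exI[of _ "map (\<lambda>q. 2*q+1) ps"]) (auto simp: hd_map last_map)
  qed
qed

lemma unft_succ:
  "successful_run (underlying (unft T D)) qs u \<longleftrightarrow>
    (\<exists>ps. qs = map (\<lambda>q. 2*q) ps \<and> successful_run (underlying T) ps u) \<or>
    (\<exists>ps. qs = map (\<lambda>q. 2*q+1) ps \<and> successful_run D ps u)"
proof
  assume s: "successful_run (underlying (unft T D)) qs u"
  then have qs: "is_path (underlying (unft T D)) qs u" "hd qs \<in> nfa_init (underlying (unft T D))"
    "last qs \<in> nfa_final (underlying (unft T D))" unfolding successful_run_def by auto
  have ne: "qs \<noteq> []" using path_ne[OF qs(1)] .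
  have lq: "last qs \<in> set qs" using ne by simp
  from unft_path_back[OF qs(1)] show "(\<exists>ps. qs = map (\<lambda>q. 2*q) ps \<and> successful_run (underlying T) ps u) \<or>
    (\<exists>ps. qs = map (\<lambda>q. 2*q+1) ps \<and> successful_run D ps u)"
  proof
    assume h: "even (hd qs) \<and> (\<forall>q\<in>set qs. even q) \<and> is_path (underlying T) (map (\<lambda>q. q div 2) qs) u"
    have "even (last qs)" using h lq by blast
    then have "successful_run (underlying T) (map (\<lambda>q. q div 2) qs) u"
      using h qs ne unfolding successful_run_def unft_sel
      by (auto simp: hd_map last_map, auto simp: underlying_def)
    then show ?thesis using map_div2_even h by metis
  next
    assume h: "odd (hd qs) \<and> (\<forall>q\<in>set qs. odd q) \<and> is_path D (map (\<lambda>q. q div 2) qs) u"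
    have "odd (last qs)" using h lq by blast
    then have "successful_run D (map (\<lambda>q. q div 2) qs) u"
      using h qs ne unfolding successful_run_def unft_sel
      by (auto simp: hd_map last_map)
    then show ?thesis using map_div2_odd h by metis
  qed
next
  assume "(\<exists>ps. qs = map (\<lambda>q. 2*q) ps \<and> successful_run (underlying T) ps u) \<or>
    (\<exists>ps. qs = map (\<lambda>q. 2*q+1) ps \<and> successful_run D ps u)"
  then show "successful_run (underlying (unft T D)) qs u"
  proof
    assume "\<exists>ps. qs = map (\<lambda>q. 2*q) ps \<and> successful_run (underlying T) ps u"
    then obtain ps where ps: "qs = map (\<lambda>q. 2*q) ps" "successful_run (underlying T) ps u" by blast
    have ne: "ps \<noteq> []" using ps(2) path_ne unfolding successful_run_def by blast
    show ?thesis using ps ne unft_path_even[of T ps u D] unfolding successful_run_def unft_sel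
      by (auto simp: hd_map last_map, auto simp: underlying_def)
  next
    assume "\<exists>ps. qs = map (\<lambda>q. 2*q+1) ps \<and> successful_run D ps u"
    then obtain ps where ps: "qs = map (\<lambda>q. 2*q+1) ps" "successful_run D ps u" by blast
    have ne: "ps \<noteq> []" using ps(2) path_ne unfolding successful_run_def by blast
    show ?thesis using ps ne unft_path_odd[of D ps u T] unfolding successful_run_def unft_sel
      by (auto simp: hd_map last_map)
  qed
qed



section \<open>Product transducer\<close>

abbreviation "pi1 p \<equiv> fst (prod_decode p)"
abbreviation "pi2 p \<equiv> snd (prod_decode p)"

definition pnft :: "(nat, 'a, 'a option) nft \<Rightarrow> (nat, 'a) nfa \<Rightarrow> (nat, 'a, 'a) nft" where
  "pnft T D = \<lparr>nft_states = prod_encode ` (nft_states T \<times> nfa_states D),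
     nft_init = (\<lambda>p. if pi2 p \<in> nfa_init D then map_option (map the) (nft_init T (pi1 p)) else None),
     nft_final = (\<lambda>p. if pi2 p \<in> nfa_final D then map_option (map the) (nft_final T (pi1 p)) else None),
     nft_delta = (\<lambda>p a q. if nfa_trans D (pi2 p) a (pi2 q)
                     then map_option (map the) (nft_delta T (pi1 p) a (pi1 q)) else None)\<rparr>"

lemma pnft_sel:
  "nfa_states (underlying (pnft T D)) = prod_encode ` (nft_states T \<times> nfa_states D)"
  "nfa_init (underlying (pnft T D)) = {p. pi1 p \<in> dom (nft_init T) \<and> pi2 p \<in> nfa_init D}"
  "nfa_final (underlying (pnft T D)) = {p. pi1 p \<in> dom (nft_final T) \<and> pi2 p \<in> nfa_final D}"
  "nfa_trans (underlying (pnft T D)) p a q \<longleftrightarrow>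
     nfa_trans (underlying T) (pi1 p) a (pi1 q) \<and> nfa_trans D (pi2 p) a (pi2 q)"
  subgoal by (simp add: pnft_def underlying_def)
  subgoal by (simp add: pnft_def underlying_def dom_def set_eq_iff)
  subgoal by (simp add: pnft_def underlying_def dom_def set_eq_iff)
  subgoal by (simp add: pnft_def underlying_def)
  done

lemma pstates: "p \<in> prod_encode ` (A \<times> B) \<longleftrightarrow> pi1 p \<in> A \<and> pi2 p \<in> B"
proof
  assume "p \<in> prod_encode ` (A \<times> B)"
  then obtain x where "x \<in> A \<times> B" "p = prod_encode x" by blast
  then show "pi1 p \<in> A \<and> pi2 p \<in> B" by (simp add: mem_Times_iff)
next
  assume "pi1 p \<in> A \<and> pi2 p \<in> B"
  then have "prod_decode p \<in> A \<times> B" by (simp add: mem_Times_iff)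
  then show "p \<in> prod_encode ` (A \<times> B)"
    by (intro image_eqI[of p prod_encode "prod_decode p"]) simp_all
qed

lemma underlying_simps[simp]:
  "nfa_states (underlying T) = nft_states T" "nfa_init (underlying T) = dom (nft_init T)"
  "nfa_final (underlying T) = dom (nft_final T)"
  "nfa_trans (underlying T) p a q = (nft_delta T p a q \<noteq> None)"
  by (simp_all add: underlying_def)

lemma pnft_path_back:
  "is_path (underlying (pnft T D)) qs u \<Longrightarrow>
    is_path (underlying T) (map pi1 qs) u \<and> is_path D (map pi2 qs) u"
proof (induction u arbitrary: qs)
  case Nil
  then obtain q where "qs = [q]" "q \<in> nfa_states (underlying (pnft T D))" by (auto simp: is_path_Nil)
  then show ?case by (simp add: pnft_sel pstates del: underlying_simps) (simp add: is_path_Nil)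
next
  case (Cons a u)
  then obtain p q rs where qs: "qs = p # q # rs" "p \<in> nfa_states (underlying (pnft T D))"
    "nfa_trans (underlying (pnft T D)) p a q" "is_path (underlying (pnft T D)) (q # rs) u"
    by (auto simp: is_path_Cons)
  have ih: "is_path (underlying T) (map pi1 (q # rs)) u \<and> is_path D (map pi2 (q # rs)) u"
    by (rule Cons.IH[OF qs(4)])
  have p: "pi1 p \<in> nft_states T" "pi2 p \<in> nfa_states D" using qs(2) by (simp_all add: pnft_sel pstates del: underlying_simps)
  have t: "nft_delta T (pi1 p) a (pi1 q) \<noteq> None" "nfa_trans D (pi2 p) a (pi2 q)"
    using qs(3) unfolding pnft_sel by simp_all
  show ?case using ih p t qs(1) by simp
qed

lemma pnft_path:
  "is_path (underlying T) ps u \<Longrightarrow> is_path D rs u \<Longrightarrow>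
    is_path (underlying (pnft T D)) (map prod_encode (zip ps rs)) u"
proof (induction u arbitrary: ps rs)
  case Nil
  then obtain p r where "ps = [p]" "rs = [r]" "p \<in> nft_states T" "r \<in> nfa_states D" by (auto simp: is_path_Nil)
  then show ?case by (simp add: pnft_sel pstates is_path_Nil del: underlying_simps)
next
  case (Cons a u)
  from Cons.prems(1) obtain p p' ps' where ps: "ps = p # p' # ps'" "p \<in> nft_states T"
    "nft_delta T p a p' \<noteq> None" "is_path (underlying T) (p' # ps') u" by (auto simp: is_path_Cons)
  from Cons.prems(2) obtain r r' rs' where rs: "rs = r # r' # rs'" "r \<in> nfa_states D"
    "nfa_trans D r a r'" "is_path D (r' # rs') u" by (auto simp: is_path_Cons)
  have ih: "is_path (underlying (pnft T D)) (map prod_encode (zip (p' # ps') (r' # rs'))) u"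
    by (rule Cons.IH[OF ps(4) rs(4)])
  have "prod_encode (p, r) \<in> nfa_states (underlying (pnft T D))" using ps(2) rs(2)
    by (simp add: pnft_sel pstates del: underlying_simps)
  moreover have "nfa_trans (underlying (pnft T D)) (prod_encode (p, r)) a (prod_encode (p', r'))"
    unfolding pnft_sel using ps(3) rs(3) by simp
  ultimately show ?case using ih ps(1) rs(1) by (simp del: underlying_simps)
qed

lemma run_output_pnft:
  "is_path (underlying (pnft T D)) qs u \<Longrightarrow>
    run_output (pnft T D) qs u = map the (run_output T (map pi1 qs) u)"
proof (induction u arbitrary: qs)
  case Nil
  then obtain q where "qs = [q]" by (auto simp: is_path_Nil)
  then show ?case by simp
next
  case (Cons a u)
  then obtain p q rs where qs: "qs = p # q # rs"
    "nfa_trans (underlying (pnft T D)) p a q" "is_path (underlying (pnft T D)) (q # rs) u"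
    by (auto simp: is_path_Cons)
  have t: "nft_delta T (pi1 p) a (pi1 q) \<noteq> None" "nfa_trans D (pi2 p) a (pi2 q)"
    using qs(2) unfolding pnft_sel by simp_all
  then obtain x where x: "nft_delta T (pi1 p) a (pi1 q) = Some x" by blast
  have "nft_delta (pnft T D) p a q = Some (map the x)" using t(2) x by (simp add: pnft_def)
  then show ?case using Cons.IH[OF qs(3)] qs(1) x by simp
qed

lemma map2_inj:
  assumes "map f xs = map f ys" "map g xs = map g ys" "\<And>x y. f x = f y \<Longrightarrow> g x = g y \<Longrightarrow> x = y"
  shows "xs = ys"
  using assms(1,2)
proof (induction xs arbitrary: ys)
  case Nil then show ?case by simp
next
  case (Cons x xs)
  then obtain y ys' where ys: "ys = y # ys'" by (cases ys) auto
  have "f x = f y" "g x = g y" "map f xs = map f ys'" "map g xs = map g ys'" using Cons.prems ys by simp_all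
  then have "x = y" "xs = ys'" using assms(3) Cons.IH by blast+
  then show ?case using ys by simp
qed



declare underlying_simps[simp del]

lemma wf_nft_facts:
  assumes "wf_nft T"
  shows "finite (nft_states T)" "dom (nft_init T) \<subseteq> nft_states T" "dom (nft_final T) \<subseteq> nft_states T"
    "nft_delta T p a q \<noteq> None \<Longrightarrow> p \<in> nft_states T \<and> q \<in> nft_states T"
  using assms unfolding wf_nft_def wf_nfa_def by (simp_all add: underlying_simps)

lemma succ_T_rel:
  "successful_run (underlying T) ps u \<Longrightarrow>
   (u, the (nft_init T (hd ps)) @ run_output T ps u @ the (nft_final T (last ps))) \<in> nft_rel T"
  unfolding nft_rel_def by blast

lemma unft_out_even:
  assumes "successful_run (underlying T) ps u"
  shows "the (nft_init (unft T D) (hd (map (\<lambda>q. 2*q) ps))) @ run_output (unft T D) (map (\<lambda>q. 2*q) ps) u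
      @ the (nft_final (unft T D) (last (map (\<lambda>q. 2*q) ps))) =
    map Some (the (nft_init T (hd ps)) @ run_output T ps u @ the (nft_final T (last ps)))"
proof -
  have p: "is_path (underlying T) ps u" and ne: "ps \<noteq> []"
    using assms path_ne unfolding successful_run_def by blast+
  obtain i0 where i0: "nft_init T (hd ps) = Some i0"
    using assms unfolding successful_run_def by (auto simp: underlying_simps)
  obtain t0 where t0: "nft_final T (last ps) = Some t0"
    using assms unfolding successful_run_def by (auto simp: underlying_simps)
  show ?thesis using ne i0 t0 run_output_unft_even[OF p, of D]
    by (simp add: hd_map last_map unft_def)
qed

lemma unft_out_odd:
  assumes "successful_run D ps u"
  shows "the (nft_init (unft T D) (hd (map (\<lambda>q. 2*q+1) ps))) @ run_output (unft T D) (map (\<lambda>q. 2*q+1) ps) u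
      @ the (nft_final (unft T D) (last (map (\<lambda>q. 2*q+1) ps))) = [None]"
proof -
  have p: "is_path D ps u" and ne: "ps \<noteq> []"
    using assms path_ne unfolding successful_run_def by blast+
  have "hd ps \<in> nfa_init D" "last ps \<in> nfa_final D" using assms unfolding successful_run_def by auto
  then show ?thesis using ne run_output_unft_odd[OF p, of T]
    by (simp add: hd_map last_map unft_def)
qed

lemma unft_correct:
  fixes T :: "(nat, 'a, 'a) nft" and D :: "(nat, 'a) nfa"
  assumes V: "monoid_variety V" and wT: "wf_nft T" and uT: "unambiguous_nft T" and vT: "V_nft V T"
    and dT: "nft_defines T f"
    and wD: "wf_nfa D" and uD: "unambiguous_nfa D" and vD: "V_automaton V D"
    and lD: "\<And>u. u \<in> nfa_lang D \<longleftrightarrow> f u = None"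
  shows "wf_nft (unft T D) \<and> unambiguous_nft (unft T D) \<and> V_nft V (unft T D) \<and> nft_defines (unft T D) (completion f)"
proof (intro conjI)
  note wT' = wf_nft_facts[OF wT]
  have wD': "finite (nfa_states D)" "nfa_init D \<subseteq> nfa_states D" "nfa_final D \<subseteq> nfa_states D"
    "\<And>p a q. nfa_trans D p a q \<Longrightarrow> p \<in> nfa_states D \<and> q \<in> nfa_states D"
    using wD unfolding wf_nfa_def by auto
  have dT': "(u, w) \<in> nft_rel T \<longleftrightarrow> f u = Some w" for u w
    using dT unfolding nft_defines_def by auto
  have finU: "finite (nfa_states (underlying (unft T D)))"
  proof (rule finite_subset)
    show "nfa_states (underlying (unft T D)) \<subseteq> (\<lambda>q. 2*q) ` nft_states T \<union> (\<lambda>q. 2*q+1) ` nfa_states D"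
    proof
      fix x assume "x \<in> nfa_states (underlying (unft T D))"
      then have "(even x \<and> x div 2 \<in> nft_states T) \<or> (odd x \<and> x div 2 \<in> nfa_states D)" by (simp add: unft_sel)
      then show "x \<in> (\<lambda>q. 2*q) ` nft_states T \<union> (\<lambda>q. 2*q+1) ` nfa_states D"
      proof
        assume h: "even x \<and> x div 2 \<in> nft_states T"
        then have "x = 2 * (x div 2)" by simp
        then show ?thesis using h by blast
      next
        assume h: "odd x \<and> x div 2 \<in> nfa_states D"
        then have "x = 2 * (x div 2) + 1" by simp
        then show ?thesis using h by blast
      qed
    qed
    show "finite ((\<lambda>q. 2*q) ` nft_states T \<union> (\<lambda>q. 2*q+1) ` nfa_states D)" using wT'(1) wD'(1) by simp
  qed
  show "wf_nft (unft T D)"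
    unfolding wf_nft_def wf_nfa_def
  proof (intro conjI allI impI)
    show "finite (nfa_states (underlying (unft T D)))" by (rule finU)
    show "nfa_init (underlying (unft T D)) \<subseteq> nfa_states (underlying (unft T D))"
      unfolding subset_iff unft_sel using wT'(2) wD'(2) by blast
    show "nfa_final (underlying (unft T D)) \<subseteq> nfa_states (underlying (unft T D))"
      unfolding subset_iff unft_sel using wT'(3) wD'(3) by blast
    fix p a q assume "nfa_trans (underlying (unft T D)) p a q"
    then show "p \<in> nfa_states (underlying (unft T D))" "q \<in> nfa_states (underlying (unft T D))"
      unfolding unft_sel using wT'(4) wD'(4) by blast+
  qed
  show "V_nft V (unft T D)"
    unfolding V_nft_def
  proof (rule V_closed[OF V _ vD finU])
    show "V_automaton V (underlying T)" using vT unfolding V_nft_def .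
    fix u v assume e1: "trans_rel (underlying T) u = trans_rel (underlying T) v" and e2: "trans_rel D u = trans_rel D v"
    show "trans_rel (underlying (unft T D)) u = trans_rel (underlying (unft T D)) v"
    proof (rule Set.set_eqI)
      fix x :: "nat \<times> nat"
      obtain p q where x: "x = (p, q)" by (cases x)
      show "x \<in> trans_rel (underlying (unft T D)) u \<longleftrightarrow> x \<in> trans_rel (underlying (unft T D)) v"
        unfolding x unft_trans_rel e1 e2 ..
    qed
  qed
  show "unambiguous_nft (unft T D)"
    unfolding unambiguous_nft_def unambiguous_nfa_def
  proof (intro allI impI, elim conjE)
    fix u qs qs' assume s1: "successful_run (underlying (unft T D)) qs u" and s2: "successful_run (underlying (unft T D)) qs' u"
    have inj1: "inj (\<lambda>q::nat. 2*q)" by (auto simp: inj_def)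
    have inj2: "inj (\<lambda>q::nat. 2*q+1)" by (auto simp: inj_def)
    have uT': "successful_run (underlying T) ps u \<Longrightarrow> successful_run (underlying T) ps' u \<Longrightarrow> ps = ps'" for ps ps'
      using uT unfolding unambiguous_nft_def unambiguous_nfa_def by blast
    have uD': "successful_run D ps u \<Longrightarrow> successful_run D ps' u \<Longrightarrow> ps = ps'" for ps ps'
      using uD unfolding unambiguous_nfa_def by blast
    have ev: "f u \<noteq> None" if "successful_run (underlying T) ps u" for ps
      using succ_T_rel[OF that] dT' by auto
    have od: "f u = None" if "successful_run D ps u" for ps
      using that lD unfolding nfa_lang_def by blast
    from s1[unfolded unft_succ] show "qs = qs'"
    proof
      assume "\<exists>ps. qs = map (\<lambda>q. 2*q) ps \<and> successful_run (underlying T) ps u"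
      then obtain ps where ps: "qs = map (\<lambda>q. 2*q) ps" "successful_run (underlying T) ps u" by blast
      from s2[unfolded unft_succ] show ?thesis
      proof
        assume "\<exists>ps. qs' = map (\<lambda>q. 2*q) ps \<and> successful_run (underlying T) ps u"
        then obtain ps' where ps': "qs' = map (\<lambda>q. 2*q) ps'" "successful_run (underlying T) ps' u" by blast
        show ?thesis using uT'[OF ps(2) ps'(2)] ps(1) ps'(1) by simp
      next
        assume "\<exists>ps. qs' = map (\<lambda>q. 2*q+1) ps \<and> successful_run D ps u"
        then obtain ps' where "successful_run D ps' u" by blast
        then have "f u = None" by (rule od)
        then show ?thesis using ev[OF ps(2)] by simp
      qed
    next
      assume "\<exists>ps. qs = map (\<lambda>q. 2*q+1) ps \<and> successful_run D ps u"
      then obtain ps where ps: "qs = map (\<lambda>q. 2*q+1) ps" "successful_run D ps u" by blast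
      from s2[unfolded unft_succ] show ?thesis
      proof
        assume "\<exists>ps. qs' = map (\<lambda>q. 2*q) ps \<and> successful_run (underlying T) ps u"
        then obtain ps' where "successful_run (underlying T) ps' u" by blast
        then have "f u \<noteq> None" by (rule ev)
        then show ?thesis using od[OF ps(2)] by simp
      next
        assume "\<exists>ps. qs' = map (\<lambda>q. 2*q+1) ps \<and> successful_run D ps u"
        then obtain ps' where ps': "qs' = map (\<lambda>q. 2*q+1) ps'" "successful_run D ps' u" by blast
        show ?thesis using uD'[OF ps(2) ps'(2)] ps(1) ps'(1) by simp
      qed
    qed
  qed
  show "nft_defines (unft T D) (completion f)"
    unfolding nft_defines_def
  proof (rule Set.set_eqI)
    fix x :: "'a list \<times> 'a option list"
    obtain u w where x: "x = (u, w)" by (cases x)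
    have "(u, w) \<in> nft_rel (unft T D) \<longleftrightarrow> completion f u = Some w"
    proof
      assume "(u, w) \<in> nft_rel (unft T D)"
      then obtain qs where qs: "successful_run (underlying (unft T D)) qs u"
        "w = the (nft_init (unft T D) (hd qs)) @ run_output (unft T D) qs u @ the (nft_final (unft T D) (last qs))"
        unfolding nft_rel_def by blast
      from qs(1)[unfolded unft_succ] show "completion f u = Some w"
      proof
        assume "\<exists>ps. qs = map (\<lambda>q. 2*q) ps \<and> successful_run (underlying T) ps u"
        then obtain ps where ps: "qs = map (\<lambda>q. 2*q) ps" "successful_run (underlying T) ps u" by blast
        have "f u = Some (the (nft_init T (hd ps)) @ run_output T ps u @ the (nft_final T (last ps)))"
          using succ_T_rel[OF ps(2)] dT' by blast
        then show ?thesis using qs(2) unft_out_even[OF ps(2), of D] ps(1) by (simp add: completion_def)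
      next
        assume "\<exists>ps. qs = map (\<lambda>q. 2*q+1) ps \<and> successful_run D ps u"
        then obtain ps where ps: "qs = map (\<lambda>q. 2*q+1) ps" "successful_run D ps u" by blast
        have "f u = None" using ps(2) lD unfolding nfa_lang_def by blast
        then show ?thesis using qs(2) unft_out_odd[OF ps(2), of T] ps(1) by (simp add: completion_def)
      qed
    next
      assume c: "completion f u = Some w"
      show "(u, w) \<in> nft_rel (unft T D)"
      proof (cases "f u")
        case None
        then have w: "w = [None]" using c by (simp add: completion_def)
        from None lD obtain ps where ps: "successful_run D ps u" unfolding nfa_lang_def by blast
        have s: "successful_run (underlying (unft T D)) (map (\<lambda>q. 2*q+1) ps) u"
          unfolding unft_succ using ps by blast
        show ?thesis unfolding nft_rel_def mem_Collect_eq case_prod_conv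
          by (intro exI[of _ "map (\<lambda>q. 2*q+1) ps"] conjI s) (simp only: unft_out_odd[OF ps] w)
      next
        case (Some w0)
        then have w: "w = map Some w0" using c by (simp add: completion_def)
        from Some dT' obtain ps where ps: "successful_run (underlying T) ps u"
          "w0 = the (nft_init T (hd ps)) @ run_output T ps u @ the (nft_final T (last ps))"
          unfolding nft_rel_def by blast
        have "successful_run (underlying (unft T D)) (map (\<lambda>q. 2*q) ps) u"
          unfolding unft_succ using ps by blast
        then show ?thesis unfolding nft_rel_def using unft_out_even[OF ps(1), of D] w ps(2) by auto
      qed
    qed
    then show "x \<in> nft_rel (unft T D) \<longleftrightarrow> x \<in> {(u, w). completion f u = Some w}" using x by simp
  qed
qed



declare underlying_simps[simp del]

lemma wf_nft_facts':
  assumes "wf_nft T"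
  shows "finite (nft_states T)" "dom (nft_init T) \<subseteq> nft_states T" "dom (nft_final T) \<subseteq> nft_states T"
    "nft_delta T p a q \<noteq> None \<Longrightarrow> p \<in> nft_states T \<and> q \<in> nft_states T"
  using assms unfolding wf_nft_def wf_nfa_def by (simp_all add: underlying_simps)

lemma last_zip': "length xs = length ys \<Longrightarrow> xs \<noteq> [] \<Longrightarrow> last (zip xs ys) = (last xs, last ys)"
proof (induction xs arbitrary: ys)
  case Nil then show ?case by simp
next
  case (Cons x xs)
  then obtain y ys' where ys: "ys = y # ys'" by (cases ys) auto
  show ?case
  proof (cases "xs = []")
    case True then show ?thesis using Cons.prems ys by simp
  next
    case False
    then have "ys' \<noteq> []" using Cons.prems ys by auto
    then show ?thesis using Cons.IH[of ys'] Cons.prems ys False by (simp add: zip_Cons)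
  qed
qed

lemma hd_zip': "xs \<noteq> [] \<Longrightarrow> ys \<noteq> [] \<Longrightarrow> hd (zip xs ys) = (hd xs, hd ys)"
  by (cases xs; cases ys) auto

lemma pi_enc_zip:
  "length ps = length rs \<Longrightarrow> map pi1 (map prod_encode (zip ps rs)) = ps \<and> map pi2 (map prod_encode (zip ps rs)) = rs"
  by (simp add: comp_def)

lemma pnft_trans_rel:
  "(p, q) \<in> trans_rel (underlying (pnft T D)) u \<longleftrightarrow>
   (pi1 p, pi1 q) \<in> trans_rel (underlying T) u \<and> (pi2 p, pi2 q) \<in> trans_rel D u"
proof
  assume "(p, q) \<in> trans_rel (underlying (pnft T D)) u"
  then obtain qs where qs: "is_path (underlying (pnft T D)) qs u" "hd qs = p" "last qs = q"
    unfolding trans_rel_def by auto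
  have ne: "qs \<noteq> []" using path_ne[OF qs(1)] .
  from pnft_path_back[OF qs(1)] show "(pi1 p, pi1 q) \<in> trans_rel (underlying T) u \<and> (pi2 p, pi2 q) \<in> trans_rel D u"
    using qs ne unfolding trans_rel_def by (auto simp: hd_map last_map)
next
  assume h: "(pi1 p, pi1 q) \<in> trans_rel (underlying T) u \<and> (pi2 p, pi2 q) \<in> trans_rel D u"
  then obtain ps rs where ps: "is_path (underlying T) ps u" "hd ps = pi1 p" "last ps = pi1 q"
    and rs: "is_path D rs u" "hd rs = pi2 p" "last rs = pi2 q"
    unfolding trans_rel_def by auto
  have ne: "ps \<noteq> []" "rs \<noteq> []" using path_ne ps rs by blast+
  have len: "length ps = length rs" using is_path_len[OF ps(1)] is_path_len[OF rs(1)] by simp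
  have "hd (map prod_encode (zip ps rs)) = p"
    using ne ps rs by (simp add: hd_map hd_zip')
  moreover have "last (map prod_encode (zip ps rs)) = q"
    using ne ps rs len by (simp add: last_map last_zip')
  ultimately show "(p, q) \<in> trans_rel (underlying (pnft T D)) u"
    unfolding trans_rel_def using pnft_path[OF ps(1) rs(1)] by blast
qed

lemma pnft_succ_back:
  assumes "successful_run (underlying (pnft T D)) qs u"
  shows "successful_run (underlying T) (map pi1 qs) u \<and> successful_run D (map pi2 qs) u"
proof -
  have qs: "is_path (underlying (pnft T D)) qs u" "hd qs \<in> nfa_init (underlying (pnft T D))"
    "last qs \<in> nfa_final (underlying (pnft T D))" using assms unfolding successful_run_def by auto
  have ne: "qs \<noteq> []" using path_ne[OF qs(1)] .
  show ?thesis using pnft_path_back[OF qs(1)] qs(2,3) ne unfolding successful_run_def pnft_sel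
    by (simp add: hd_map last_map underlying_simps)
qed

lemma pnft_succ:
  assumes "successful_run (underlying T) ps u" "successful_run D rs u"
  shows "successful_run (underlying (pnft T D)) (map prod_encode (zip ps rs)) u"
proof -
  have p: "is_path (underlying T) ps u" "is_path D rs u" using assms unfolding successful_run_def by auto
  have ne: "ps \<noteq> []" "rs \<noteq> []" using path_ne p by blast+
  have len: "length ps = length rs" using is_path_len[OF p(1)] is_path_len[OF p(2)] by simp
  show ?thesis using pnft_path[OF p] assms ne len unfolding successful_run_def pnft_sel
    by (simp add: hd_map last_map hd_zip' last_zip' underlying_simps)
qed

lemma pnft_out:
  assumes "successful_run (underlying (pnft T D)) qs u"
  shows "the (nft_init (pnft T D) (hd qs)) @ run_output (pnft T D) qs u @ the (nft_final (pnft T D) (last qs)) =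
    map the (the (nft_init T (hd (map pi1 qs))) @ run_output T (map pi1 qs) u @ the (nft_final T (last (map pi1 qs))))"
proof -
  have qs: "is_path (underlying (pnft T D)) qs u" "hd qs \<in> nfa_init (underlying (pnft T D))"
    "last qs \<in> nfa_final (underlying (pnft T D))" using assms unfolding successful_run_def by auto
  have ne: "qs \<noteq> []" using path_ne[OF qs(1)] .
  obtain i0 where i0: "nft_init T (pi1 (hd qs)) = Some i0" "pi2 (hd qs) \<in> nfa_init D"
    using qs(2) unfolding pnft_sel by auto
  obtain t0 where t0: "nft_final T (pi1 (last qs)) = Some t0" "pi2 (last qs) \<in> nfa_final D"
    using qs(3) unfolding pnft_sel by auto
  show ?thesis using i0 t0 ne run_output_pnft[OF qs(1)] by (simp add: pnft_def hd_map last_map)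
qed

lemma pnft_correct:
  fixes T :: "(nat, 'a, 'a option) nft" and D :: "(nat, 'a) nfa" and f :: "'a list \<Rightarrow> 'a list option"
  assumes V: "monoid_variety V" and wT: "wf_nft T" and uT: "unambiguous_nft T" and vT: "V_nft V T"
    and dT: "nft_defines T (completion f)"
    and wD: "wf_nfa D" and uD: "unambiguous_nfa D" and vD: "V_automaton V D"
    and lD: "\<And>u. u \<in> nfa_lang D \<longleftrightarrow> f u \<noteq> None"
  shows "wf_nft (pnft T D) \<and> unambiguous_nft (pnft T D) \<and> V_nft V (pnft T D) \<and> nft_defines (pnft T D) f"
proof (intro conjI)
  note wT' = wf_nft_facts'[OF wT]
  have wD': "finite (nfa_states D)" "nfa_init D \<subseteq> nfa_states D" "nfa_final D \<subseteq> nfa_states D"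
    "\<And>p a q. nfa_trans D p a q \<Longrightarrow> p \<in> nfa_states D \<and> q \<in> nfa_states D"
    using wD unfolding wf_nfa_def by auto
  have dT': "(u, w) \<in> nft_rel T \<longleftrightarrow> completion f u = Some w" for u w
    using dT unfolding nft_defines_def by auto
  have finP: "finite (nfa_states (underlying (pnft T D)))"
    unfolding pnft_sel using wT'(1) wD'(1) by simp
  show "wf_nft (pnft T D)"
    unfolding wf_nft_def wf_nfa_def
  proof (intro conjI allI impI)
    show "finite (nfa_states (underlying (pnft T D)))" by (rule finP)
    show "nfa_init (underlying (pnft T D)) \<subseteq> nfa_states (underlying (pnft T D))"
      unfolding subset_iff pnft_sel pstates mem_Collect_eq using wT'(2) wD'(2) by blast
    show "nfa_final (underlying (pnft T D)) \<subseteq> nfa_states (underlying (pnft T D))"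
      unfolding subset_iff pnft_sel pstates mem_Collect_eq using wT'(3) wD'(3) by blast
    fix p a q assume "nfa_trans (underlying (pnft T D)) p a q"
    then have t: "nft_delta T (pi1 p) a (pi1 q) \<noteq> None" "nfa_trans D (pi2 p) a (pi2 q)"
      unfolding pnft_sel by (simp_all add: underlying_simps)
    show "p \<in> nfa_states (underlying (pnft T D))" "q \<in> nfa_states (underlying (pnft T D))"
      unfolding pnft_sel pstates using wT'(4)[OF t(1)] wD'(4)[OF t(2)] by simp_all
  qed
  show "V_nft V (pnft T D)"
    unfolding V_nft_def
  proof (rule V_closed[OF V _ vD finP])
    show "V_automaton V (underlying T)" using vT unfolding V_nft_def .
    fix u v assume e1: "trans_rel (underlying T) u = trans_rel (underlying T) v" and e2: "trans_rel D u = trans_rel D v"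
    show "trans_rel (underlying (pnft T D)) u = trans_rel (underlying (pnft T D)) v"
    proof (rule Set.set_eqI)
      fix x :: "nat \<times> nat"
      obtain p q where x: "x = (p, q)" by (cases x)
      show "x \<in> trans_rel (underlying (pnft T D)) u \<longleftrightarrow> x \<in> trans_rel (underlying (pnft T D)) v"
        unfolding x pnft_trans_rel e1 e2 ..
    qed
  qed
  show "unambiguous_nft (pnft T D)"
    unfolding unambiguous_nft_def unambiguous_nfa_def
  proof (intro allI impI, elim conjE)
    fix u qs qs' assume s1: "successful_run (underlying (pnft T D)) qs u" and s2: "successful_run (underlying (pnft T D)) qs' u"
    have uT': "successful_run (underlying T) ps u \<Longrightarrow> successful_run (underlying T) ps' u \<Longrightarrow> ps = ps'" for ps ps'
      using uT unfolding unambiguous_nft_def unambiguous_nfa_def by blast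
    have uD': "successful_run D ps u \<Longrightarrow> successful_run D ps' u \<Longrightarrow> ps = ps'" for ps ps'
      using uD unfolding unambiguous_nfa_def by blast
    have e1: "map pi1 qs = map pi1 qs'" using uT' pnft_succ_back[OF s1] pnft_succ_back[OF s2] by blast
    have e2: "map pi2 qs = map pi2 qs'" using uD' pnft_succ_back[OF s1] pnft_succ_back[OF s2] by blast
    show "qs = qs'"
    proof (rule map2_inj[OF e1 e2])
      fix x y :: nat assume "pi1 x = pi1 y" "pi2 x = pi2 y"
      then have "prod_decode x = prod_decode y" by (simp add: prod_eq_iff)
      then show "x = y" by (metis prod_decode_inverse)
    qed
  qed
  show "nft_defines (pnft T D) f"
    unfolding nft_defines_def
  proof (rule Set.set_eqI)
    fix x :: "'a list \<times> 'a list"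
    obtain u w where x: "x = (u, w)" by (cases x)
    have "(u, w) \<in> nft_rel (pnft T D) \<longleftrightarrow> f u = Some w"
    proof
      assume "(u, w) \<in> nft_rel (pnft T D)"
      then obtain qs where qs: "successful_run (underlying (pnft T D)) qs u"
        "w = the (nft_init (pnft T D) (hd qs)) @ run_output (pnft T D) qs u @ the (nft_final (pnft T D) (last qs))"
        unfolding nft_rel_def by blast
      note sb = pnft_succ_back[OF qs(1)]
      have "f u \<noteq> None" using sb lD unfolding nfa_lang_def by blast
      then obtain w0 where w0: "f u = Some w0" by blast
      have "(u, the (nft_init T (hd (map pi1 qs))) @ run_output T (map pi1 qs) u @ the (nft_final T (last (map pi1 qs))))
          \<in> nft_rel T" unfolding nft_rel_def using sb by blast
      then have "the (nft_init T (hd (map pi1 qs))) @ run_output T (map pi1 qs) u @ the (nft_final T (last (map pi1 qs)))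
          = map Some w0" using dT' w0 by (simp add: completion_def)
      then have "w = map the (map Some w0)" using qs(2) pnft_out[OF qs(1)] by simp
      then show "f u = Some w" using w0 by (simp add: comp_def)
    next
      assume fw: "f u = Some w"
      then have "(u, map Some w) \<in> nft_rel T" using dT' by (simp add: completion_def)
      then obtain ps where ps: "successful_run (underlying T) ps u"
        "map Some w = the (nft_init T (hd ps)) @ run_output T ps u @ the (nft_final T (last ps))"
        unfolding nft_rel_def by blast
      from fw lD obtain rs where rs: "successful_run D rs u" unfolding nfa_lang_def by blast
      have len: "length ps = length rs" using ps(1) rs unfolding successful_run_def
        using is_path_len by (metis)
      define qs where "qs = map prod_encode (zip ps rs)"
      have s: "successful_run (underlying (pnft T D)) qs u" unfolding qs_def by (rule pnft_succ[OF ps(1) rs])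
      have m: "map pi1 qs = ps" unfolding qs_def using pi_enc_zip[OF len] by blast
      have "the (nft_init (pnft T D) (hd qs)) @ run_output (pnft T D) qs u @ the (nft_final (pnft T D) (last qs))
          = map the (map Some w)"
        using pnft_out[OF s] unfolding m ps(2)[symmetric] .
      then have "the (nft_init (pnft T D) (hd qs)) @ run_output (pnft T D) qs u @ the (nft_final (pnft T D) (last qs)) = w"
        by (simp add: comp_def)
      then show "(u, w) \<in> nft_rel (pnft T D)" unfolding nft_rel_def using s by blast
    qed
    then show "x \<in> nft_rel (pnft T D) \<longleftrightarrow> x \<in> {(u, w). f u = Some w}" using x by simp
  qed
qed


theorem mainTheorem16:
  fixes V :: "nat monoid \<Rightarrow> bool"
    and f :: "'a::finite list \<Rightarrow> 'a list option"
  assumes "monoid_variety V"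
    and "rational f"
    and "V_language V (dom f)"
  shows "(\<exists>T :: (nat, 'a, 'a) nft. wf_nft T \<and> unambiguous_nft T \<and> V_nft V T \<and> nft_defines T f)
     \<longleftrightarrow> (\<exists>T :: (nat, 'a, 'a option) nft. wf_nft T \<and> unambiguous_nft T \<and> V_nft V T
            \<and> nft_defines T (completion f))"
proof -
  obtain A :: "(nat, 'a) nfa" where A: "wf_nfa A" "V_automaton V A" "nfa_lang A = dom f"
    using assms(3) unfolding V_language_def by blast
  show ?thesis
  proof
    assume "\<exists>T :: (nat, 'a, 'a) nft. wf_nft T \<and> unambiguous_nft T \<and> V_nft V T \<and> nft_defines T f"
    then obtain T :: "(nat, 'a, 'a) nft" where T: "wf_nft T" "unambiguous_nft T" "V_nft V T" "nft_defines T f"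
      by blast
    have lD: "u \<in> nfa_lang (sdfa A False) \<longleftrightarrow> f u = None" for u
      using sdfa_lang[OF A(1), of u False] A(3) by auto
    show "\<exists>T :: (nat, 'a, 'a option) nft. wf_nft T \<and> unambiguous_nft T \<and> V_nft V T
            \<and> nft_defines T (completion f)"
      using unft_correct[OF assms(1) T sdfa_wf[OF A(1)] sdfa_unamb sdfa_V[OF assms(1) A(1) A(2)] lD] by blast
  next
    assume "\<exists>T :: (nat, 'a, 'a option) nft. wf_nft T \<and> unambiguous_nft T \<and> V_nft V T
            \<and> nft_defines T (completion f)"
    then obtain T :: "(nat, 'a, 'a option) nft" where T: "wf_nft T" "unambiguous_nft T" "V_nft V T"
      "nft_defines T (completion f)" by blast
    have lD: "u \<in> nfa_lang (sdfa A True) \<longleftrightarrow> f u \<noteq> None" for u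
      using sdfa_lang[OF A(1), of u True] A(3) by auto
    show "\<exists>T :: (nat, 'a, 'a) nft. wf_nft T \<and> unambiguous_nft T \<and> V_nft V T \<and> nft_defines T f"
      using pnft_correct[OF assms(1) T sdfa_wf[OF A(1)] sdfa_unamb sdfa_V[OF assms(1) A(1) A(2)] lD] by blast
  qed
qed

end
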